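(* For $n=2$ the representation $\theta:FVB_2\to{\rm Aut}(F_4)$ is faithful.
   Context: $FVB_2$ is the group $\langle\sigma_1,\rho_1\mid \sigma_1^2=\rho_1^2=1\rangle$. $F_4$ is free on $x_1,x_2,y_1,y_2$, and $\theta$ is the homomorphism determined by $\theta(\sigma_1):x_1\mapsto x_2y_2,\ x_2\mapsto x_1y_2^{-1},\ y_1\mapsto y_1,\ y_2\mapsto y_2$ and $\theta(\rho_1):x_1\mapsto x_2,\ x_2\mapsto x_1,\ y_1\mapsto y_2,\ y_2\mapsto y_1$. Automorphisms are composed on the right: $(fg)(x)=g(f(x))$. *)

theory Defs
  imports Main
begin

datatype gen = X1 | X2 | Y1 | Y2

text \<open>A letter is a generator with an exponent sign: True = +1, False = -1.\<close>
type_synonym letter = "gen \<times> bool"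
type_synonym word = "letter list"

definition cancels :: "letter \<Rightarrow> letter \<Rightarrow> bool" where
  "cancels a b \<longleftrightarrow> fst a = fst b \<and> snd a \<noteq> snd b"

fun red :: "word \<Rightarrow> word" where
  "red [] = []"
| "red (a # w) = (case red w of [] \<Rightarrow> [a]
                   | b # w' \<Rightarrow> (if cancels a b then w' else a # b # w'))"

text \<open>Elements of F_4 are the reduced words.\<close>
definition reduced :: "word \<Rightarrow> bool" where
  "reduced v \<longleftrightarrow> (\<forall>i. Suc i < length v \<longrightarrow> \<not> cancels (v ! i) (v ! Suc i))"

definition winv :: "word \<Rightarrow> word" where
  "winv w = rev (map (\<lambda>(g, b). (g, \<not> b)) w)"

definition img :: "(gen \<Rightarrow> word) \<Rightarrow> letter \<Rightarrow> word" where
  "img f a = (if snd a then f (fst a) else winv (f (fst a)))"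

definition endo :: "(gen \<Rightarrow> word) \<Rightarrow> word \<Rightarrow> word" where
  "endo f v = red (concat (map (img f) v))"

datatype fvb_gen = Sig | Rho

text \<open>Words in the generators; since both generators are involutions, the group is
  the monoid presented by these generators and the relations s s = 1. Two words
  represent the same element of FVB_2 iff they are related by the congruence
  generated by these relations.\<close>
inductive fvb_equiv :: "fvb_gen list \<Rightarrow> fvb_gen list \<Rightarrow> bool" where
  fvb_refl: "fvb_equiv w w"
| fvb_sym: "fvb_equiv w u \<Longrightarrow> fvb_equiv u w"
| fvb_trans: "fvb_equiv w u \<Longrightarrow> fvb_equiv u z \<Longrightarrow> fvb_equiv w z"
| fvb_rel: "fvb_equiv (p @ [s, s] @ q) (p @ q)"

fun theta_gen :: "fvb_gen \<Rightarrow> gen \<Rightarrow> word" where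
  "theta_gen Sig X1 = [(X2, True), (Y2, True)]"
| "theta_gen Sig X2 = [(X1, True), (Y2, False)]"
| "theta_gen Sig Y1 = [(Y1, True)]"
| "theta_gen Sig Y2 = [(Y2, True)]"
| "theta_gen Rho X1 = [(X2, True)]"
| "theta_gen Rho X2 = [(X1, True)]"
| "theta_gen Rho Y1 = [(Y2, True)]"
| "theta_gen Rho Y2 = [(Y1, True)]"

text \<open>theta of the word s_1 ... s_k, applied to v.  Automorphisms compose on the
  right, (fg)(x) = g(f(x)), so theta(s_1) is applied first.\<close>
definition theta :: "fvb_gen list \<Rightarrow> word \<Rightarrow> word" where
  "theta w v = foldl (\<lambda>v s. endo (theta_gen s) v) v w"

end

theory Submission
  imports Defs
begin

definition lv :: "gen \<Rightarrow> letter \<Rightarrow> int" where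
  "lv g l = (if fst l = g then (if snd l then 1 else -1) else 0)"

definition es :: "word \<Rightarrow> gen \<Rightarrow> int" where
  "es w g = sum_list (map (lv g) w)"

lemma es_simps[simp]: "es [] g = 0" "es (a # w) g = lv g a + es w g"
  "es (w @ u) g = es w g + es u g"
  by (simp_all add: es_def)

lemma es_red[simp]: "es (red w) g = es w g"
proof (induction w)
  case Nil then show ?case by simp
next
  case (Cons a w)
  show ?case
  proof (cases "red w")
    case Nil then show ?thesis using Cons by simp
  next
    case (Cons b w')
    then show ?thesis using Cons.IH
      by (cases a; cases b; auto simp: cancels_def lv_def)
  qed
qed

lemma es_winv[simp]: "es (winv w) g = - es w g"
  by (induction w) (auto simp: winv_def lv_def)

definition DD :: "word \<Rightarrow> int" where "DD w = es w X1 - es w X2"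
definition SS :: "word \<Rightarrow> int" where "SS w = es w Y1 + es w Y2"

lemma sig_cm: "DD (concat (map (img (theta_gen Sig)) v)) = - DD v \<and>
   SS (concat (map (img (theta_gen Sig)) v)) = SS v + DD v"
proof (induction v)
  case Nil then show ?case by (simp add: DD_def SS_def)
next
  case (Cons a v)
  obtain h b where a: "a = (h, b)" by fastforce
  show ?case using Cons unfolding a
    by (cases h; cases b; simp add: DD_def SS_def img_def lv_def winv_def; linarith)
qed

lemma rho_cm: "DD (concat (map (img (theta_gen Rho)) v)) = - DD v \<and>
   SS (concat (map (img (theta_gen Rho)) v)) = SS v"
proof (induction v)
  case Nil then show ?case by (simp add: DD_def SS_def)
next
  case (Cons a v)
  obtain h b where a: "a = (h, b)" by fastforce
  show ?case using Cons unfolding a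
    by (cases h; cases b; simp add: DD_def SS_def img_def lv_def winv_def; linarith)
qed

lemma DD_red[simp]: "DD (red w) = DD w" and SS_red[simp]: "SS (red w) = SS w"
  by (simp_all add: DD_def SS_def)

fun step :: "int \<times> int \<Rightarrow> fvb_gen \<Rightarrow> int \<times> int" where
  "step (d, s) Sig = (-d, s + d)"
| "step (d, s) Rho = (-d, s)"

lemma endo_step: "(DD (endo (theta_gen a) v), SS (endo (theta_gen a) v)) = step (DD v, SS v) a"
  using sig_cm[of v] rho_cm[of v] by (cases a) (simp_all add: endo_def)

lemma theta_run: "(DD (theta w v), SS (theta w v)) = foldl step (DD v, SS v) w"
proof (induction w arbitrary: v)
  case Nil then show ?case by (simp add: theta_def)
next
  case (Cons a w)
  have "theta (a # w) v = theta w (endo (theta_gen a) v)" by (simp add: theta_def)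
  then show ?case using Cons endo_step[of a v] by simp
qed

fun nf :: "fvb_gen list \<Rightarrow> fvb_gen list" where
  "nf [] = []"
| "nf (a # w) = (case nf w of [] \<Rightarrow> [a] | b # w' \<Rightarrow> (if a = b then w' else a # b # w'))"

lemma fvb_cons: "fvb_equiv w u \<Longrightarrow> fvb_equiv (a # w) (a # u)"
proof (induction rule: fvb_equiv.induct)
  case (fvb_refl w) then show ?case by (rule fvb_equiv.fvb_refl)
next
  case (fvb_sym w u) then show ?case by (metis fvb_equiv.fvb_sym)
next
  case (fvb_trans w u z) then show ?case by (metis fvb_equiv.fvb_trans)
next
  case (fvb_rel p s q) then show ?case using fvb_equiv.fvb_rel[of "a # p" s q] by simp
qed

lemma fvb_nf: "fvb_equiv w (nf w)"
proof (induction w)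
  case Nil then show ?case by (simp add: fvb_equiv.fvb_refl)
next
  case (Cons a w)
  have h: "fvb_equiv (a # w) (a # nf w)" using Cons fvb_cons by blast
  show ?case
  proof (cases "nf w")
    case Nil then show ?thesis using h by simp
  next
    case (Cons b w')
    show ?thesis
    proof (cases "a = b")
      case True
      have "fvb_equiv (a # b # w') w'" using fvb_equiv.fvb_rel[of "[]" a w'] True by simp
      then show ?thesis using h Cons True by (simp add: fvb_equiv.fvb_trans)
    next
      case False then show ?thesis using h Cons by simp
    qed
  qed
qed

lemma step_twice[simp]: "step (step x a) a = x"
  by (cases x; cases a) auto

lemma run_nf: "foldl step x (nf w) = foldl step x w"
proof (induction w arbitrary: x)
  case Nil then show ?case by simp
next
  case (Cons a w)
  show ?case
  proof (cases "nf w")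
    case Nil then show ?thesis using Cons.IH[of "step x a"] by simp
  next
    case (Cons b w')
    then show ?thesis using Cons.IH[of "step x a"] by auto
  qed
qed

fun oth :: "fvb_gen \<Rightarrow> fvb_gen" where "oth Sig = Rho" | "oth Rho = Sig"

fun altw :: "fvb_gen \<Rightarrow> nat \<Rightarrow> fvb_gen list" where
  "altw a 0 = []"
| "altw a (Suc n) = a # altw (oth a) n"

lemma len_altw[simp]: "length (altw a n) = n"
  by (induction n arbitrary: a) auto

lemma oth_neq: "b \<noteq> a \<Longrightarrow> b = oth a" by (cases a; cases b) auto

lemma nf_alt: "\<exists>a n. nf w = altw a n"
proof (induction w)
  case Nil then show ?case by (intro exI[of _ Sig] exI[of _ 0]) simp
next
  case (Cons a w)
  then obtain c k where c: "nf w = altw c k" by blast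
  show ?case
  proof (cases k)
    case 0 then show ?thesis using c by (intro exI[of _ a] exI[of _ 1]) simp
  next
    case (Suc n)
    then have nw: "nf w = c # altw (oth c) n" using c by simp
    show ?thesis
    proof (cases "a = c")
      case True then show ?thesis using nw by (intro exI[of _ "oth c"] exI[of _ n]) simp
    next
      case False
      then have "c = oth a" by (cases a; cases c) auto
      then show ?thesis using nw False by (intro exI[of _ a] exI[of _ "Suc (Suc n)"]) simp
    qed
  qed
qed

lemma run_alt:
  "foldl step (d, s) (altw Sig n) = (d * (-1) ^ n, s + d * int ((n + 1) div 2)) \<and>
   foldl step (d, s) (altw Rho n) = (d * (-1) ^ n, s - d * int (n div 2))"
proof (induction n arbitrary: d s)
  case 0 then show ?case by simp
next
  case (Suc n)
  have a: "(Suc n + 1) div 2 = Suc (n div 2)" by simp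
  have b: "Suc n div 2 = (n + 1) div 2" by simp
  show ?case using Suc[of "-d" "s + d"] Suc[of "-d" s] unfolding a b
    by (simp add: algebra_simps)
qed

lemma pow_eq: "((-1::int) ^ n = (-1) ^ m) \<Longrightarrow> even n = even m"
  by (metis neg_one_even_power neg_one_odd_power one_neq_neg_one)

lemma alt_inj:
  assumes "foldl step (1, 0) (altw a n) = foldl step (1, 0) (altw b m)"
  shows "altw a n = altw b m"
proof -
  have key: "n = m \<or> (n = 0 \<and> m = 0)" if "a \<noteq> b \<longrightarrow> (a = Sig \<and> b = Rho)"
  proof -
    show ?thesis
    proof (cases a; cases b)
      assume "a = Sig" "b = Sig"
      then have pp: "(-1::int) ^ n = (-1) ^ m" "(n + 1) div 2 = (m + 1) div 2"
        using assms run_alt[of 1 0 n] run_alt[of 1 0 m] by auto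
      have "even n = even m" using pp(1) pow_eq by blast
      then show ?thesis using pp(2) by presburger
    next
      assume "a = Rho" "b = Rho"
      then have pp: "(-1::int) ^ n = (-1) ^ m" "n div 2 = m div 2"
        using assms run_alt[of 1 0 n] run_alt[of 1 0 m] by auto
      have "even n = even m" using pp(1) pow_eq by blast
      then show ?thesis using pp(2) by presburger
    next
      assume "a = Sig" "b = Rho"
      then have pp: "(-1::int) ^ n = (-1) ^ m" "int ((n + 1) div 2) = - int (m div 2)"
        using assms run_alt[of 1 0 n] run_alt[of 1 0 m] by auto
      have "even n = even m" using pp(1) pow_eq by blast
      then show ?thesis using pp(2) by presburger
    next
      assume "a = Rho" "b = Sig"
      then show ?thesis using that by simp
    qed
  qed
  show ?thesis
  proof (cases "a = Rho \<and> b = Sig")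
    case True
    then have pp: "(-1::int) ^ m = (-1) ^ n" "int ((m + 1) div 2) = - int (n div 2)"
      using assms run_alt[of 1 0 n] run_alt[of 1 0 m] by auto
    have "even m = even n" using pp(1) pow_eq by blast
    then have "m = 0 \<and> n = 0" using pp(2) by presburger
    then show ?thesis by simp
  next
    case False
    then have "n = m \<or> (n = 0 \<and> m = 0)" using key by (cases a; cases b) auto
    moreover have "a = b \<or> n = 0"
    proof (rule ccontr)
      assume "\<not> (a = b \<or> n = 0)"
      then have "a = Sig" "b = Rho" "n \<noteq> 0" using False by (cases a; cases b; auto)+
      then have pp: "(-1::int) ^ n = (-1) ^ m" "int ((n + 1) div 2) = - int (m div 2)"
        using assms run_alt[of 1 0 n] run_alt[of 1 0 m] by auto
      have "even n = even m" using pp(1) pow_eq by blast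
      then show False using \<open>n \<noteq> 0\<close> pp(2) by presburger
    qed
    ultimately show ?thesis by auto
  qed
qed

theorem proposition7:
  fixes w u :: "fvb_gen list"
  assumes "\<forall>v. reduced v \<longrightarrow> theta w v = theta u v"
  shows "fvb_equiv w u"
proof -
  let ?v = "[(X1, True)]"
  have "reduced ?v" by (simp add: reduced_def)
  then have "theta w ?v = theta u ?v" using assms by blast
  then have "foldl step (1, 0) w = foldl step (1, 0) u"
    using theta_run[of w ?v] theta_run[of u ?v]
    by (simp add: DD_def SS_def lv_def)
  then have e: "foldl step (1, 0) (nf w) = foldl step (1, 0) (nf u)" by (simp add: run_nf)
  obtain a n where a: "nf w = altw a n" using nf_alt by blast
  obtain b m where b: "nf u = altw b m" using nf_alt by blast
  have "nf w = nf u" using alt_inj[of a n b m] e a b by simp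
  then show ?thesis using fvb_nf[of w] fvb_nf[of u]
    by (metis fvb_equiv.fvb_sym fvb_equiv.fvb_trans)
qed

end
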